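(* Let $L\subset\mathbf{R}^n$ be an $n$-dimensional lattice and let $H$ be a lamina of $L$. Consider the family of parallel laminae $\{H+v: v\in L\}$, which partitions $L$ into parallel layers. Then every Delaunay polytope of $L$ lies between two neighboring hyperplanes of this family, and all its vertices lie on these two hyperplanes.
   Context: An empty sphere is a sphere with no lattice point in its interior; a Delaunay polytope of $L$ is the convex hull of all lattice points lying on an empty sphere, when this hull is $n$-dimensional; Delaunay polytopes form the Delaunay partition of $\mathbf{R}^n$. A hyperplane $H$ such that $H\cap L$ is an $(n-1)$-dimensional sub-lattice of $L$ is a lamina of $L$ if every $(n-1)$-dimensional Delaunay polytope of the lattice $L\cap H$ (within $H$) is a facet of a Delaunay polytope of $L$, i.e. $H$ is partitioned into facets of Delaunay polytopes of $L$. Two hyperplanes of the family $\{H+v:v\in L\}$ are neighboring if no hyperplane of the family lies strictly between them. *)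

theory Defs
  imports "HOL-Analysis.Analysis"
begin

definition is_lattice :: "(real^'n) set \<Rightarrow> bool" where
  "is_lattice L \<longleftrightarrow> (\<exists>b :: 'n \<Rightarrow> real^'n. inj b \<and> independent (range b) \<and>
      L = {(\<Sum>i\<in>UNIV. real_of_int (c i) *\<^sub>R b i) | c. True})"

definition empty_sphere :: "(real^'n) set \<Rightarrow> real^'n \<Rightarrow> real \<Rightarrow> bool" where
  "empty_sphere L c r \<longleftrightarrow> (\<forall>v\<in>L. r \<le> dist c v)"

definition delaunay_polytope :: "(real^'n) set \<Rightarrow> (real^'n) set \<Rightarrow> bool" where
  "delaunay_polytope L P \<longleftrightarrow> (\<exists>c r. empty_sphere L c r \<and>
      P = convex hull (L \<inter> sphere c r) \<and> aff_dim P = int CARD('n))"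

text \<open>(n-1)-dimensional Delaunay polytope of the sublattice L \<inter> H inside the hyperplane H
  (spheres within H are traces of spheres of R^n centred in H).\<close>
definition delaunay_polytope_in :: "(real^'n) set \<Rightarrow> (real^'n) set \<Rightarrow> (real^'n) set \<Rightarrow> bool" where
  "delaunay_polytope_in L H Q \<longleftrightarrow> (\<exists>c r. c \<in> H \<and> empty_sphere (L \<inter> H) c r \<and>
      Q = convex hull ((L \<inter> H) \<inter> sphere c r) \<and> aff_dim Q = int CARD('n) - 1)"

definition lattice_hyperplane :: "(real^'n) set \<Rightarrow> (real^'n) set \<Rightarrow> bool" where
  "lattice_hyperplane L H \<longleftrightarrow> subspace H \<and> dim H = CARD('n) - 1 \<and> dim (H \<inter> L) = CARD('n) - 1"

definition lamina :: "(real^'n) set \<Rightarrow> (real^'n) set \<Rightarrow> bool" where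
  "lamina L H \<longleftrightarrow> lattice_hyperplane L H \<and>
     (\<forall>Q. delaunay_polytope_in L H Q \<longrightarrow> (\<exists>P. delaunay_polytope L P \<and> Q facet_of P))"

definition translates :: "(real^'n) set \<Rightarrow> (real^'n) set \<Rightarrow> (real^'n) set set" where
  "translates L H = {(\<lambda>x. x + v) ` H | v. v \<in> L}"

definition neighboring :: "(real^'n) set \<Rightarrow> (real^'n) set \<Rightarrow> (real^'n) set \<Rightarrow> (real^'n) set \<Rightarrow> bool" where
  "neighboring L H A B \<longleftrightarrow> A \<in> translates L H \<and> B \<in> translates L H \<and> A \<noteq> B \<and>
     \<not> (\<exists>C\<in>translates L H. C \<noteq> A \<and> C \<noteq> B \<and> C \<subseteq> convex hull (A \<union> B))"

end

theory Submission
  imports Defs "HOL-Library.FuncSet"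
begin

lemma lat_add:
  assumes "is_lattice L" "x \<in> L" "y \<in> L" shows "x + y \<in> L"
proof -
  obtain b :: "'a \<Rightarrow> real^'a" where L: "L = {(\<Sum>i\<in>UNIV. real_of_int (c i) *\<^sub>R b i) | c. True}"
    using assms(1) unfolding is_lattice_def by blast
  obtain c d where x: "x = (\<Sum>i\<in>UNIV. real_of_int (c i) *\<^sub>R b i)"
      and y: "y = (\<Sum>i\<in>UNIV. real_of_int (d i) *\<^sub>R b i)"
    using assms(2,3) L by blast
  have "x + y = (\<Sum>i\<in>UNIV. real_of_int ((\<lambda>i. c i + d i) i) *\<^sub>R b i)"
    unfolding x y by (simp add: sum.distrib scaleR_add_left)
  then show ?thesis unfolding L by (intro CollectI exI[of _ "\<lambda>i. c i + d i"]) simp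
qed

lemma lat_intmult:
  assumes "is_lattice L" "x \<in> L" shows "real_of_int k *\<^sub>R x \<in> L"
proof -
  obtain b :: "'a \<Rightarrow> real^'a" where L: "L = {(\<Sum>i\<in>UNIV. real_of_int (c i) *\<^sub>R b i) | c. True}"
    using assms(1) unfolding is_lattice_def by blast
  obtain c where x: "x = (\<Sum>i\<in>UNIV. real_of_int (c i) *\<^sub>R b i)"
    using assms(2) L by blast
  have "real_of_int k *\<^sub>R x = (\<Sum>i\<in>UNIV. real_of_int ((\<lambda>i. k * c i) i) *\<^sub>R b i)"
    unfolding x by (simp add: scaleR_sum_right)
  then show ?thesis unfolding L by (intro CollectI exI[of _ "\<lambda>i. k * c i"]) simp
qed

lemma lat_zero: assumes "is_lattice L" shows "0 \<in> L"
proof -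
  obtain b :: "'a \<Rightarrow> real^'a" where L: "L = {(\<Sum>i\<in>UNIV. real_of_int (c i) *\<^sub>R b i) | c. True}"
    using assms(1) unfolding is_lattice_def by blast
  show ?thesis unfolding L by (intro CollectI exI[of _ "\<lambda>i. 0::int"]) simp
qed

lemma lat_neg: assumes "is_lattice L" "x \<in> L" shows "- x \<in> L"
  using lat_intmult[OF assms, of "-1"] by simp

lemma lat_diff: assumes "is_lattice L" "x \<in> L" "y \<in> L" shows "x - y \<in> L"
  using lat_add[OF assms(1,2) lat_neg[OF assms(1,3)]] by simp

lemma lat_sum:
  assumes "is_lattice L" "finite S" "\<And>s. s \<in> S \<Longrightarrow> f s \<in> L" shows "sum f S \<in> L"
  using assms(2,3)
proof (induction S rule: finite_induct)
  case empty then show ?case using lat_zero[OF assms(1)] by simp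
next
  case (insert x F) then show ?case using lat_add[OF assms(1)] by simp
qed

lemma lat_finite:
  fixes L :: "(real^'n) set"
  assumes "is_lattice L" "bounded S" shows "finite (L \<inter> S)"
proof -
  obtain b :: "'n \<Rightarrow> real^'n" where ib: "inj b" and ind: "independent (range b)" and
     L: "L = {(\<Sum>i\<in>UNIV. real_of_int (c i) *\<^sub>R b i) | c. True}"
    using assms(1) unfolding is_lattice_def by blast
  define f where "f = (\<lambda>v::real^'n. \<Sum>i\<in>UNIV. (v$i) *\<^sub>R b i)"
  have lf: "linear f" unfolding f_def
    by (intro linearI) (simp_all add: sum.distrib scaleR_add_left scaleR_sum_right)
  have "inj f"
  proof -
    have "v = 0" if "f v = 0" for v
    proof (rule ccontr)
      assume "v \<noteq> 0"
      then obtain i where vi: "v$i \<noteq> 0" by (metis vec_eq_iff zero_index)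
      define u where "u = (\<lambda>x. v $ (inv b x))"
      have "(\<Sum>x\<in>range b. u x *\<^sub>R x) = (\<Sum>j\<in>UNIV. u (b j) *\<^sub>R b j)"
        by (simp add: sum.reindex[OF ib])
      also have "\<dots> = f v" unfolding f_def u_def by (simp add: inv_f_f[OF ib])
      finally have "(\<Sum>x\<in>range b. u x *\<^sub>R x) = 0" using that by simp
      moreover have "u (b i) \<noteq> 0" unfolding u_def using vi by (simp add: inv_f_f[OF ib])
      ultimately have "dependent (range b)"
        by (subst dependent_finite) auto
      then show False using ind by simp
    qed
    then show ?thesis using lf by (simp add: linear_inj_iff_eq_0)
  qed
  obtain g where lg: "linear g" and gf: "g \<circ> f = id"
    using linear_injective_left_inverse[OF lf \<open>inj f\<close>] by blast
  obtain B where B: "\<And>x. norm (g x) \<le> B * norm x" using linear_bounded[OF lg] by blast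
  obtain r where r: "\<And>x. x \<in> S \<Longrightarrow> norm x \<le> r" using assms(2) unfolding bounded_iff by blast
  define N where "N = ceiling (\<bar>B\<bar> * \<bar>r\<bar>)"
  define T :: "(real^'n) set" where "T = vec_lambda ` (Pi UNIV (\<lambda>_. real_of_int ` {-N..N}))"
  have fT: "finite T" unfolding T_def
    by (intro finite_imageI) (simp add: PiE_UNIV_domain[symmetric] finite_PiE)
  have "L \<inter> S \<subseteq> f ` T"
  proof
    fix y assume y: "y \<in> L \<inter> S"
    then obtain c where yc: "y = (\<Sum>i\<in>UNIV. real_of_int (c i) *\<^sub>R b i)" using L by blast
    define vc where "vc = (\<chi> i. real_of_int (c i))"
    have fy: "y = f vc" unfolding yc f_def vc_def by simp
    have "vc = g y" using gf fy by (metis comp_apply id_apply)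
    then have nv: "norm vc \<le> \<bar>B\<bar> * \<bar>r\<bar>"
    proof -
      have "norm vc \<le> B * norm y" using B[of y] \<open>vc = g y\<close> by simp
      also have "\<dots> \<le> \<bar>B\<bar> * norm y" by (intro mult_right_mono) auto
      also have "\<dots> \<le> \<bar>B\<bar> * \<bar>r\<bar>" using r[of y] y by (intro mult_left_mono) auto
      finally show ?thesis .
    qed
    have "vc \<in> T" unfolding T_def
    proof (rule image_eqI[of _ _ "vec_nth vc"])
      show "vc = vec_lambda (vec_nth vc)" by simp
      show "vec_nth vc \<in> Pi UNIV (\<lambda>_. real_of_int ` {-N..N})"
      proof (simp add: Pi_def, intro allI)
        fix i
        have "\<bar>real_of_int (c i)\<bar> \<le> \<bar>B\<bar> * \<bar>r\<bar>"
          using component_le_norm_cart[of vc i] nv unfolding vc_def by simp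
        then have "\<bar>c i\<bar> \<le> N" unfolding N_def by linarith
        then have "c i \<in> {-N..N}" by auto
        then show "vc $ i \<in> real_of_int ` {-N..N}" unfolding vc_def by auto
      qed
    qed
    then show "y \<in> f ` T" using fy by blast
  qed
  then show ?thesis using fT finite_subset by blast
qed


lemma lat_cover:
  fixes L H :: "(real^'n) set"
  assumes "is_lattice L" "lattice_hyperplane L H"
  shows "\<exists>R. \<forall>y\<in>H. \<exists>z\<in>L \<inter> H. dist y z \<le> R"
proof -
  have sH: "subspace H" and dH: "dim H = CARD('n) - 1" and dHL: "dim (H \<inter> L) = CARD('n) - 1"
    using assms(2) unfolding lattice_hyperplane_def by auto
  have "span (H \<inter> L) \<subseteq> H" using sH by (simp add: span_minimal)
  then have spH: "span (H \<inter> L) = H"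
    using subspace_dim_equal[OF subspace_span sH] dH dHL by (simp add: dim_span)
  obtain B where B: "B \<subseteq> H \<inter> L" "independent B" "H \<inter> L \<subseteq> span B"
    using basis_exists[of "H \<inter> L"] by metis
  have fB: "finite B" using B(2) independent_bound by blast
  have HB: "H \<subseteq> span B" using spH B(3) by (metis span_minimal subspace_span)
  show ?thesis
  proof (intro exI[of _ "\<Sum>v\<in>B. norm v"] ballI)
    fix y assume "y \<in> H"
    then have "y \<in> span B" using HB by blast
    then obtain u where y: "y = (\<Sum>v\<in>B. u v *\<^sub>R v)" using span_finite[OF fB] by auto
    define z where "z = (\<Sum>v\<in>B. real_of_int (floor (u v)) *\<^sub>R v)"
    have "z \<in> L" unfolding z_def
      using B(1) by (intro lat_sum[OF assms(1) fB] lat_intmult[OF assms(1)]) auto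
    moreover have "z \<in> H" unfolding z_def
      using B(1) sH by (intro subspace_sum subspace_scale) auto
    moreover have "dist y z \<le> (\<Sum>v\<in>B. norm v)"
    proof -
      have "y - z = (\<Sum>v\<in>B. (u v - real_of_int (floor (u v))) *\<^sub>R v)"
        unfolding y z_def by (simp add: sum_subtractf scaleR_diff_left)
      then have "dist y z = norm (\<Sum>v\<in>B. (u v - real_of_int (floor (u v))) *\<^sub>R v)"
        by (simp add: dist_norm)
      also have "\<dots> \<le> (\<Sum>v\<in>B. norm ((u v - real_of_int (floor (u v))) *\<^sub>R v))"
        by (rule norm_sum)
      also have "\<dots> \<le> (\<Sum>v\<in>B. norm v)"
      proof (rule sum_mono)
        fix v
        have "\<bar>u v - real_of_int (floor (u v))\<bar> \<le> 1" by linarith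
        then show "norm ((u v - real_of_int (floor (u v))) *\<^sub>R v) \<le> norm v"
          by (simp add: mult_left_le_one_le)
      qed
      finally show ?thesis .
    qed
    ultimately show "\<exists>z\<in>L \<inter> H. dist y z \<le> (\<Sum>v\<in>B. norm v)" by blast
  qed
qed

lemma hyperplane_normal:
  fixes H :: "(real^'n) set"
  assumes "subspace H" "dim H = CARD('n) - 1"
  shows "\<exists>w. w \<noteq> 0 \<and> H = {x. w \<bullet> x = 0}"
proof -
  have "span H = H" using assms(1) by (simp add: span_eq_iff)
  obtain a where a: "a \<noteq> 0" "span H = {x. a \<bullet> x = 0}"
    using dim_eq_hyperplane[of H] assms(2) by auto
  have "H = {x. a \<bullet> x = 0}" using \<open>span H = H\<close> a(2) by simp
  then show ?thesis using a(1) by blast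
qed

definition pw :: "real^'n \<Rightarrow> real \<Rightarrow> real^'n \<Rightarrow> real" where
  "pw a \<beta> y = y \<bullet> y - 2 * (a \<bullet> y) - \<beta>"

lemma pw_dist: "pw a \<beta> y = (dist a y)^2 - (\<beta> + a \<bullet> a)"
  unfolding pw_def dist_norm power2_norm_eq_inner
  by (simp add: inner_diff_left inner_diff_right inner_commute)

lemma pw_shift: "pw (a + t *\<^sub>R u) (\<beta> - 2 * t * m) y = pw a \<beta> y - 2 * t * (u \<bullet> y - m)"
  unfolding pw_def by (simp add: inner_add_left algebra_simps)

lemma quad_bounded:
  fixes c :: "real^'n"
  shows "bounded {y. y \<bullet> y \<le> c \<bullet> y + d}"
proof -
  have "norm y \<le> max 1 (norm c + \<bar>d\<bar>)" if "y \<bullet> y \<le> c \<bullet> y + d" for y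
  proof (rule ccontr)
    assume "\<not> ?thesis"
    then have y1: "norm y > 1" and y2: "norm y > norm c + \<bar>d\<bar>" by auto
    have "norm y * norm y = y \<bullet> y" by (simp add: power2_norm_eq_inner[symmetric] power2_eq_square)
    also have "\<dots> \<le> norm c * norm y + \<bar>d\<bar>" using that Cauchy_Schwarz_ineq2[of c y] by linarith
    also have "\<dots> \<le> norm c * norm y + \<bar>d\<bar> * norm y" using y1
      by (intro add_left_mono) (simp add: mult_le_cancel_left1)
    also have "\<dots> = (norm c + \<bar>d\<bar>) * norm y" by (simp add: algebra_simps)
    also have "\<dots> < norm y * norm y" using y2 y1 by (intro mult_strict_right_mono) auto
    finally show False by simp
  qed
  then show ?thesis unfolding bounded_iff by blast
qed

lemma perturb:
  fixes M :: "(real^'n) set"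
  assumes fin: "\<And>S. bounded S \<Longrightarrow> finite (M \<inter> S)"
    and emp: "\<forall>y\<in>M. 0 \<le> pw a \<beta> y"
    and con: "\<forall>y\<in>M. pw a \<beta> y = 0 \<longrightarrow> u \<bullet> y < m"
  shows "\<exists>t. 0 < t \<and> t \<le> 1 \<and> (\<forall>y\<in>M. 0 \<le> pw a \<beta> y - 2 * t * (u \<bullet> y - m))"
proof -
  define K where "K = {y\<in>M. u \<bullet> y > m \<and> pw a \<beta> y \<le> 2 * (u \<bullet> y - m)}"
  have "K \<subseteq> M \<inter> {y. y \<bullet> y \<le> (2 *\<^sub>R (a + u)) \<bullet> y + (\<beta> - 2 * m)}"
    unfolding K_def pw_def by (auto simp: inner_add_left algebra_simps)
  then have fK: "finite K" using fin[OF quad_bounded] finite_subset by blast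
  define f where "f = (\<lambda>y. pw a \<beta> y / (2 * (u \<bullet> y - m)))"
  define t where "t = Min (insert 1 (f ` K))"
  have fpos: "f y > 0" if "y \<in> K" for y
  proof -
    have "pw a \<beta> y \<noteq> 0" using that con unfolding K_def by auto
    then have "pw a \<beta> y > 0" using emp that unfolding K_def by force
    then show ?thesis using that unfolding K_def f_def by auto
  qed
  have t0: "t > 0" unfolding t_def using fK fpos by (subst Min_gr_iff) auto
  have t1: "t \<le> 1" unfolding t_def using fK by (intro Min_le) auto
  have tK: "t \<le> f y" if "y \<in> K" for y unfolding t_def using fK that by (intro Min_le) auto
  have "0 \<le> pw a \<beta> y - 2 * t * (u \<bullet> y - m)" if y: "y \<in> M" for y
  proof (cases "u \<bullet> y > m")
    case False
    then have "2 * t * (u \<bullet> y - m) \<le> 0" using t0 by (simp add: mult_nonneg_nonpos)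
    moreover have "0 \<le> pw a \<beta> y" using emp y by blast
    ultimately show ?thesis by linarith
  next
    case True
    show ?thesis
    proof (cases "y \<in> K")
      case yK: True
      then have "t * (2 * (u \<bullet> y - m)) \<le> pw a \<beta> y" using tK[OF yK] True
        unfolding f_def by (simp add: le_divide_eq)
      then show ?thesis by (simp add: algebra_simps)
    next
      case False
      then have "pw a \<beta> y > 2 * (u \<bullet> y - m)" using y True unfolding K_def by auto
      moreover have "t * (u \<bullet> y - m) \<le> 1 * (u \<bullet> y - m)" using t1 True
        by (intro mult_right_mono) auto
      ultimately show ?thesis by linarith
    qed
  qed
  then show ?thesis using t0 t1 by blast
qed


lemma cell_contains:
  fixes M H :: "(real^'n) set"
  assumes fin: "\<And>S. bounded S \<Longrightarrow> finite (M \<inter> S)"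
    and cov: "\<forall>y\<in>H. \<exists>z\<in>M. dist y z \<le> R"
    and MH: "M \<subseteq> H" and Hw: "H = {x. w \<bullet> x = 0}" and w0: "w \<noteq> 0" and xH: "x \<in> H"
  shows "\<exists>a \<beta>. a \<in> H \<and> (\<forall>y\<in>M. 0 \<le> pw a \<beta> y) \<and> x \<in> convex hull {y\<in>M. pw a \<beta> y = 0}"
proof -
  define F where "F = {p. w \<bullet> fst p = 0} \<inter> (\<Inter>y\<in>M. {p. 0 \<le> pw (fst p) (snd p) y})
      \<inter> {p. 0 \<le> - pw (fst p) (snd p) x}"
  have clF: "closed F" unfolding F_def pw_def
    by (intro closed_Int closed_INT closed_Collect_le closed_Collect_eq continuous_intros ballI)
  have R0: "R \<ge> 0" using cov xH by (meson dist_not_less_zero order.trans linorder_not_le)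
  have bF: "F \<subseteq> cball 0 (norm x + R) \<times> cball 0 (R^2 + (norm x + R)^2)"
  proof
    fix p assume pF: "p \<in> F"
    obtain a \<beta> where p: "p = (a, \<beta>)" by fastforce
    have aH: "a \<in> H" using pF Hw unfolding F_def p by auto
    obtain z where z: "z \<in> M" "dist a z \<le> R" using cov aH by blast
    have "0 \<le> pw a \<beta> z" using pF z unfolding F_def p by auto
    then have "\<beta> + a \<bullet> a \<le> (dist a z)^2" unfolding pw_dist by simp
    also have "\<dots> \<le> R^2" using z(2) by (intro power_mono) auto
    finally have b1: "\<beta> + a \<bullet> a \<le> R^2" .
    have "0 \<le> - pw a \<beta> x" using pF unfolding F_def p by auto
    then have b2: "(dist a x)^2 \<le> \<beta> + a \<bullet> a" unfolding pw_dist by simp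
    then have "(dist a x)^2 \<le> R^2" using b1 by linarith
    then have "dist a x \<le> R" using R0 by (simp add: power2_le_iff_abs_le)
    then have na: "norm a \<le> norm x + R"
      by (metis dist_commute dist_norm norm_triangle_sub order.trans add_left_mono)
    have aa: "a \<bullet> a \<le> (norm x + R)^2"
      using na by (simp add: power2_norm_eq_inner[symmetric] power_mono)
    have "\<bar>\<beta>\<bar> \<le> R^2 + (norm x + R)^2"
      using b1 b2 aa by (smt (verit) zero_le_power2 inner_ge_zero)
    then show "p \<in> cball 0 (norm x + R) \<times> cball 0 (R^2 + (norm x + R)^2)"
      unfolding p using na by auto
  qed
  have "bounded F" by (rule bounded_subset[OF bounded_Times[OF bounded_cball bounded_cball] bF])
  then have cF: "compact F" using clF by (simp add: compact_eq_bounded_closed)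
  have "(x, - (x \<bullet> x)) \<in> F" unfolding F_def using xH Hw by (auto simp: pw_dist)
  then have neF: "F \<noteq> {}" by blast
  have contJ: "continuous_on F (\<lambda>p. - pw (fst p) (snd p) x)" unfolding pw_def
    by (intro continuous_intros)
  obtain p where pF: "p \<in> F" and pmax: "\<And>q. q \<in> F \<Longrightarrow> - pw (fst q) (snd q) x \<le> - pw (fst p) (snd p) x"
    using continuous_attains_sup[OF cF neF contJ] by blast
  obtain a \<beta> where p: "p = (a, \<beta>)" by fastforce
  have aH: "a \<in> H" using pF Hw unfolding F_def p by auto
  have emp: "\<forall>y\<in>M. 0 \<le> pw a \<beta> y" using pF unfolding F_def p by auto
  define C where "C = {y\<in>M. pw a \<beta> y = 0}"
  have "x \<in> convex hull C"
  proof (rule ccontr)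
    assume xC: "x \<notin> convex hull C"
    have "C \<subseteq> M \<inter> {y. y \<bullet> y \<le> (2 *\<^sub>R a) \<bullet> y + \<beta>}" unfolding C_def pw_def by auto
    then have fC: "finite C" using fin[OF quad_bounded] finite_subset by blast
    have "closed (convex hull C)"
      using fC by (simp add: compact_imp_closed compact_convex_hull finite_imp_compact)
    then obtain u0 b0 where u0: "u0 \<bullet> x < b0" "\<forall>z\<in>convex hull C. u0 \<bullet> z > b0"
      using separating_hyperplane_closed_point[OF convex_convex_hull _ xC] by blast
    define u where "u = - (u0 - ((u0 \<bullet> w) / (w \<bullet> w)) *\<^sub>R w)"
    define m where "m = - b0"
    have ww: "w \<bullet> w \<noteq> 0" using w0 by simp
    have wu: "w \<bullet> u = 0" unfolding u_def using ww by (simp add: inner_diff_right inner_commute)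
    have uH: "u \<bullet> y = - (u0 \<bullet> y)" if "y \<in> H" for y
    proof -
      have "w \<bullet> y = 0" using that Hw by auto
      then have "y \<bullet> w = 0" by (simp add: inner_commute)
      then show ?thesis unfolding u_def by (simp add: inner_diff_right inner_commute)
    qed
    have ux: "u \<bullet> x > m" using uH[OF xH] u0(1) unfolding m_def by simp
    have con: "\<forall>y\<in>M. pw a \<beta> y = 0 \<longrightarrow> u \<bullet> y < m"
    proof (intro ballI impI)
      fix y assume "y \<in> M" "pw a \<beta> y = 0"
      then have "y \<in> convex hull C" "y \<in> H" using MH unfolding C_def by (auto intro: hull_inc)
      then show "u \<bullet> y < m" using u0(2) uH unfolding m_def by force
    qed
    obtain t where t: "0 < t" "\<forall>y\<in>M. 0 \<le> pw a \<beta> y - 2 * t * (u \<bullet> y - m)"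
      using perturb[OF fin emp con] by blast
    define q where "q = (a + t *\<^sub>R u, \<beta> - 2 * t * m)"
    have Jq: "- pw (fst q) (snd q) x = - pw a \<beta> x + 2 * t * (u \<bullet> x - m)"
      unfolding q_def by (simp add: pw_shift)
    have "2 * t * (u \<bullet> x - m) > 0" using t(1) ux by simp
    then have Jgt: "- pw (fst q) (snd q) x > - pw a \<beta> x" using Jq by linarith
    have "q \<in> F"
    proof -
      have "w \<bullet> (a + t *\<^sub>R u) = 0" using aH Hw wu by (simp add: inner_add_right)
      moreover have "\<forall>y\<in>M. 0 \<le> pw (a + t *\<^sub>R u) (\<beta> - 2 * t * m) y"
        using t(2) by (simp add: pw_shift)
      moreover have "0 \<le> - pw a \<beta> x" using pF unfolding F_def p by auto
      ultimately show ?thesis using Jgt unfolding F_def q_def by auto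
    qed
    then show False using pmax[of q] Jgt unfolding p by simp
  qed
  then show ?thesis using aH emp unfolding C_def by blast
qed


lemma walk_step:
  fixes M H :: "(real^'n) set"
  assumes fin: "\<And>S. bounded S \<Longrightarrow> finite (M \<inter> S)"
    and cov: "\<forall>y\<in>H. \<exists>z\<in>M. dist y z \<le> R"
    and MH: "M \<subseteq> H" and Hw: "H = {x. w \<bullet> x = 0}" and w0: "w \<noteq> 0"
    and aH: "a \<in> H" and emp: "\<forall>y\<in>M. 0 \<le> pw a \<beta> y"
    and C: "C = {y\<in>M. pw a \<beta> y = 0}" and Cne: "C \<noteq> {}"
    and lt: "aff_dim C < int CARD('n) - 1"
  shows "\<exists>a' \<beta>'. a' \<in> H \<and> (\<forall>y\<in>M. 0 \<le> pw a' \<beta>' y) \<and> C \<subseteq> {y\<in>M. pw a' \<beta>' y = 0}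
            \<and> aff_dim C < aff_dim {y\<in>M. pw a' \<beta>' y = 0}"
proof -
  obtain p0 where p0: "p0 \<in> C" using Cne by blast
  define D where "D = (\<lambda>y. y - p0) ` C"
  have adC: "aff_dim C = int (dim D)" unfolding D_def
    by (rule aff_dim_eq_dim_subtract) (simp add: p0 hull_inc)
  have sH: "subspace H" using Hw subspace_hyperplane by simp
  have DH: "D \<subseteq> H" unfolding D_def using C MH p0 sH by (auto intro: subspace_diff)
  have "aff_dim H = int CARD('n) - 1" using Hw w0 by simp
  then have dH: "int (dim H) = int CARD('n) - 1" using aff_dim_subspace[OF sH] by simp
  have spH: "span H = H" using sH by (simp add: span_eq_iff)
  have "span D \<subset> span H"
  proof
    show "span D \<subseteq> span H" using DH by (simp add: span_mono)
    show "span D \<noteq> span H"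
    proof
      assume "span D = span H"
      then have "dim D = dim H" by (metis dim_span)
      then show False using adC dH lt by simp
    qed
  qed
  then obtain u where u: "u \<noteq> 0" "u \<in> span H" "\<And>y. y \<in> span D \<Longrightarrow> orthogonal u y"
    using orthogonal_to_subspace_exists_gen by blast
  have uH: "u \<in> H" using u(2) spH by simp
  define m where "m = u \<bullet> p0"
  have uC: "u \<bullet> p = m" if "p \<in> C" for p
  proof -
    have "p - p0 \<in> span D" unfolding D_def using that by (auto intro: span_base)
    then have "u \<bullet> (p - p0) = 0" using u(3) unfolding orthogonal_def by blast
    then show ?thesis unfolding m_def by (simp add: inner_diff_right)
  qed
  obtain y0 where y0: "y0 \<in> M" "u \<bullet> y0 > m"
  proof -
    have uu: "u \<bullet> u > 0" using u(1) by simp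
    define s where "s = (\<bar>m\<bar> + norm u * R + 1) / (u \<bullet> u)"
    have "s *\<^sub>R u \<in> H" using uH sH by (simp add: subspace_scale)
    then obtain z where z: "z \<in> M" "dist (s *\<^sub>R u) z \<le> R" using cov by blast
    have "u \<bullet> z = s * (u \<bullet> u) + u \<bullet> (z - s *\<^sub>R u)" by (simp add: inner_diff_right)
    moreover have "s * (u \<bullet> u) = \<bar>m\<bar> + norm u * R + 1" unfolding s_def using uu by simp
    moreover have "\<bar>u \<bullet> (z - s *\<^sub>R u)\<bar> \<le> norm u * R"
    proof -
      have "\<bar>u \<bullet> (z - s *\<^sub>R u)\<bar> \<le> norm u * norm (z - s *\<^sub>R u)" by (rule Cauchy_Schwarz_ineq2)
      also have "\<dots> \<le> norm u * R" using z(2)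
        by (intro mult_left_mono) (auto simp: dist_norm norm_minus_commute)
      finally show ?thesis .
    qed
    ultimately have "u \<bullet> z > m" by linarith
    then show thesis using that z(1) by blast
  qed
  define f where "f = (\<lambda>y. pw a \<beta> y / (2 * (u \<bullet> y - m)))"
  define T0 where "T0 = f y0"
  define K where "K = {y\<in>M. u \<bullet> y > m \<and> pw a \<beta> y \<le> 2 * T0 * (u \<bullet> y - m)}"
  have "K \<subseteq> M \<inter> {y. y \<bullet> y \<le> (2 *\<^sub>R a + (2 * T0) *\<^sub>R u) \<bullet> y + (\<beta> - 2 * T0 * m)}"
    unfolding K_def pw_def by (auto simp: inner_add_left algebra_simps)
  then have fK: "finite K" using fin[OF quad_bounded] finite_subset by blast
  have "2 * T0 * (u \<bullet> y0 - m) = pw a \<beta> y0" unfolding T0_def f_def using y0(2) by (simp add: field_simps)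
  then have y0K: "y0 \<in> K" unfolding K_def using y0 by auto
  define t where "t = Min (f ` K)"
  have "t \<in> f ` K" unfolding t_def using fK y0K by (intro Min_in) auto
  then obtain ys where ys: "ys \<in> K" "t = f ys" by blast
  have fnn: "f y \<ge> 0" if "y \<in> K" for y using that emp unfolding K_def f_def by auto
  have t0: "t \<ge> 0" using fnn ys by simp
  have tK: "t \<le> f y" if "y \<in> K" for y unfolding t_def using fK that by (intro Min_le) auto
  have tT0: "t \<le> T0" using tK[OF y0K] unfolding T0_def .
  have newemp: "0 \<le> pw a \<beta> y - 2 * t * (u \<bullet> y - m)" if y: "y \<in> M" for y
  proof (cases "u \<bullet> y > m")
    case False
    then have "2 * t * (u \<bullet> y - m) \<le> 0" using t0 by (simp add: mult_nonneg_nonpos)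
    moreover have "0 \<le> pw a \<beta> y" using emp y by blast
    ultimately show ?thesis by linarith
  next
    case True
    show ?thesis
    proof (cases "y \<in> K")
      case yK: True
      then have "t * (2 * (u \<bullet> y - m)) \<le> pw a \<beta> y" using tK[OF yK] True
        unfolding f_def by (simp add: le_divide_eq)
      then show ?thesis by (simp add: algebra_simps)
    next
      case False
      then have "pw a \<beta> y > 2 * T0 * (u \<bullet> y - m)" using y True unfolding K_def by auto
      moreover have "t * (u \<bullet> y - m) \<le> T0 * (u \<bullet> y - m)" using tT0 True
        by (intro mult_right_mono) auto
      ultimately show ?thesis by linarith
    qed
  qed
  define a' where "a' = a + t *\<^sub>R u"
  define \<beta>' where "\<beta>' = \<beta> - 2 * t * m"
  have pw': "pw a' \<beta>' y = pw a \<beta> y - 2 * t * (u \<bullet> y - m)" for y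
    unfolding a'_def \<beta>'_def by (rule pw_shift)
  define C' where "C' = {y\<in>M. pw a' \<beta>' y = 0}"
  have a'H: "a' \<in> H" unfolding a'_def using aH uH sH by (intro subspace_add subspace_scale) auto
  have emp': "\<forall>y\<in>M. 0 \<le> pw a' \<beta>' y" using newemp pw' by simp
  have CC': "C \<subseteq> C'" unfolding C'_def using uC C by (auto simp: pw')
  have ysC': "ys \<in> C'"
  proof -
    have ym: "u \<bullet> ys > m" "ys \<in> M" using ys(1) unfolding K_def by auto
    have "t * (2 * (u \<bullet> ys - m)) = pw a \<beta> ys" using ys(2) ym unfolding f_def by simp
    then have "pw a' \<beta>' ys = 0" unfolding pw' by (simp add: algebra_simps)
    then show ?thesis unfolding C'_def using ym by simp
  qed
  have "affine hull C \<subseteq> {z. u \<bullet> z = m}"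
    using uC by (intro hull_minimal) (auto simp: affine_hyperplane)
  moreover have "u \<bullet> ys > m" using ys(1) unfolding K_def by auto
  ultimately have "ys \<notin> affine hull C" by auto
  then have "aff_dim (insert ys C) = aff_dim C + 1" by (simp add: aff_dim_insert)
  moreover have "aff_dim (insert ys C) \<le> aff_dim C'" using CC' ysC' by (intro aff_dim_subset) auto
  ultimately have "aff_dim C < aff_dim C'" by linarith
  then show ?thesis using a'H emp' CC' unfolding C'_def by blast
qed


lemma cell_full:
  fixes M H :: "(real^'n) set"
  assumes fin: "\<And>S. bounded S \<Longrightarrow> finite (M \<inter> S)"
    and cov: "\<forall>y\<in>H. \<exists>z\<in>M. dist y z \<le> R"
    and MH: "M \<subseteq> H" and Hw: "H = {x. w \<bullet> x = 0}" and w0: "w \<noteq> 0" and xH: "x \<in> H"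
  shows "\<exists>a \<beta>. a \<in> H \<and> (\<forall>y\<in>M. 0 \<le> pw a \<beta> y) \<and> x \<in> convex hull {y\<in>M. pw a \<beta> y = 0}
           \<and> aff_dim {y\<in>M. pw a \<beta> y = 0} = int CARD('n) - 1"
proof -
  have ub: "aff_dim {y\<in>M. pw a \<beta> y = 0} \<le> int CARD('n) - 1" for a \<beta>
  proof -
    have "aff_dim {y\<in>M. pw a \<beta> y = 0} \<le> aff_dim H" using MH by (intro aff_dim_subset) auto
    also have "aff_dim H = int CARD('n) - 1" using Hw w0 by simp
    finally show ?thesis .
  qed
  have walk: "\<And>a \<beta>. nat (int CARD('n) - 1 - aff_dim {y\<in>M. pw a \<beta> y = 0}) = k \<Longrightarrow> a \<in> H \<Longrightarrow>
      (\<forall>y\<in>M. 0 \<le> pw a \<beta> y) \<Longrightarrow> {y\<in>M. pw a \<beta> y = 0} \<noteq> {} \<Longrightarrow>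
      (\<exists>a' \<beta>'. a' \<in> H \<and> (\<forall>y\<in>M. 0 \<le> pw a' \<beta>' y) \<and> {y\<in>M. pw a \<beta> y = 0} \<subseteq> {y\<in>M. pw a' \<beta>' y = 0}
         \<and> aff_dim {y\<in>M. pw a' \<beta>' y = 0} = int CARD('n) - 1)" for k
  proof (induction k rule: less_induct)
    case (less k a \<beta>)
    show ?case
    proof (cases "aff_dim {y\<in>M. pw a \<beta> y = 0} = int CARD('n) - 1")
      case True then show ?thesis using less.prems by blast
    next
      case False
      then have lt: "aff_dim {y\<in>M. pw a \<beta> y = 0} < int CARD('n) - 1" using ub[of a \<beta>] by simp
      obtain a' \<beta>' where st: "a' \<in> H" "\<forall>y\<in>M. 0 \<le> pw a' \<beta>' y"
          "{y\<in>M. pw a \<beta> y = 0} \<subseteq> {y\<in>M. pw a' \<beta>' y = 0}"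
          "aff_dim {y\<in>M. pw a \<beta> y = 0} < aff_dim {y\<in>M. pw a' \<beta>' y = 0}"
        using walk_step[OF fin cov MH Hw w0 less.prems(2,3) refl less.prems(4) lt] by blast
      have "nat (int CARD('n) - 1 - aff_dim {y\<in>M. pw a' \<beta>' y = 0}) < k"
        using less.prems(1) st(4) ub[of a' \<beta>'] lt by linarith
      moreover have "{y\<in>M. pw a' \<beta>' y = 0} \<noteq> {}" using st(3) less.prems(4) by blast
      ultimately obtain a'' \<beta>'' where "a'' \<in> H" "\<forall>y\<in>M. 0 \<le> pw a'' \<beta>'' y"
          "{y\<in>M. pw a' \<beta>' y = 0} \<subseteq> {y\<in>M. pw a'' \<beta>'' y = 0}"
          "aff_dim {y\<in>M. pw a'' \<beta>'' y = 0} = int CARD('n) - 1"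
        using less.IH[OF _ refl st(1,2)] by blast
      then show ?thesis using st(3) by blast
    qed
  qed
  obtain a \<beta> where a: "a \<in> H" "\<forall>y\<in>M. 0 \<le> pw a \<beta> y" "x \<in> convex hull {y\<in>M. pw a \<beta> y = 0}"
    using cell_contains[OF fin cov MH Hw w0 xH] by blast
  then have "{y\<in>M. pw a \<beta> y = 0} \<noteq> {}" by (metis convex_hull_empty empty_iff)
  then obtain a' \<beta>' where "a' \<in> H" "\<forall>y\<in>M. 0 \<le> pw a' \<beta>' y"
      "{y\<in>M. pw a \<beta> y = 0} \<subseteq> {y\<in>M. pw a' \<beta>' y = 0}"
      "aff_dim {y\<in>M. pw a' \<beta>' y = 0} = int CARD('n) - 1"
    using walk[OF refl a(1,2)] by blast
  moreover have "x \<in> convex hull {y\<in>M. pw a' \<beta>' y = 0}"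
    using hull_mono[OF \<open>{y\<in>M. pw a \<beta> y = 0} \<subseteq> _\<close>] a(3) by blast
  ultimately show ?thesis by blast
qed


lemma delaunay_basic:
  fixes L P :: "(real^'n) set"
  assumes "delaunay_polytope L P"
  obtains c r where "empty_sphere L c r" "P = convex hull (L \<inter> sphere c r)"
    "aff_dim P = int CARD('n)" "convex P" "interior P \<noteq> {}"
proof -
  obtain c r where cr: "empty_sphere L c r" "P = convex hull (L \<inter> sphere c r)" "aff_dim P = int CARD('n)"
    using assms unfolding delaunay_polytope_def by blast
  have cP: "convex P" using cr(2) by simp
  have "P \<noteq> {}"
  proof
    assume "P = {}" then have "aff_dim P = -1" by simp
    with cr(3) show False by simp
  qed
  then have "rel_interior P \<noteq> {}" using rel_interior_eq_empty[OF cP] by simp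
  moreover have "interior P = rel_interior P" using interior_rel_interior_gen[of P] cr(3) by simp
  ultimately show ?thesis using that cr cP by simp
qed

lemma delaunay_unique:
  fixes L :: "(real^'n) set"
  assumes e1: "empty_sphere L c1 r1" and e2: "empty_sphere L c2 r2"
    and y1: "y0 \<in> interior (convex hull (L \<inter> sphere c1 r1))"
    and y2: "y0 \<in> interior (convex hull (L \<inter> sphere c2 r2))"
  shows "convex hull (L \<inter> sphere c1 r1) = convex hull (L \<inter> sphere c2 r2)"
proof -
  have r1: "r1 \<ge> 0"
  proof (rule ccontr)
    assume "\<not> r1 \<ge> 0" then have "sphere c1 r1 = {}" by simp
    then show False using y1 by simp
  qed
  have r2: "r2 \<ge> 0"
  proof (rule ccontr)
    assume "\<not> r2 \<ge> 0" then have "sphere c2 r2 = {}" by simp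
    then show False using y2 by simp
  qed
  define d where "d = c1 - c2"
  define k where "k = c1 \<bullet> c1 - c2 \<bullet> c2 - r1^2 + r2^2"
  define g where "g = (\<lambda>y. k - 2 * (d \<bullet> y))"
  have dsq: "(dist y c)^2 = y \<bullet> y - 2 * (c \<bullet> y) + c \<bullet> c" for y c :: "real^'n"
    unfolding dist_norm power2_norm_eq_inner by (simp add: inner_diff_left inner_diff_right inner_commute)
  have gid: "g y = ((dist y c1)^2 - r1^2) - ((dist y c2)^2 - r2^2)" for y
    unfolding g_def k_def d_def dsq by (simp add: inner_diff_left)
  have conv_le: "convex {y. g y \<le> 0}"
  proof -
    have "{y. g y \<le> 0} = {y. (- (2 *\<^sub>R d)) \<bullet> y \<le> - k}" unfolding g_def by auto
    then show ?thesis by (metis convex_halfspace_le)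
  qed
  have conv_ge: "convex {y. g y \<ge> 0}"
  proof -
    have "{y. g y \<ge> 0} = {y. (2 *\<^sub>R d) \<bullet> y \<le> k}" unfolding g_def by auto
    then show ?thesis by (metis convex_halfspace_le)
  qed
  have "L \<inter> sphere c1 r1 \<subseteq> {y. g y \<le> 0}"
  proof
    fix y assume y: "y \<in> L \<inter> sphere c1 r1"
    then have "dist y c1 = r1" by (simp add: dist_commute)
    moreover have "r2 \<le> dist c2 y" using e2 y unfolding empty_sphere_def by blast
    then have "r2 \<le> dist y c2" by (simp add: dist_commute)
    then have "r2^2 \<le> (dist y c2)^2" using r2 by (intro power_mono) auto
    ultimately show "y \<in> {y. g y \<le> 0}" unfolding gid by simp
  qed
  then have P1: "convex hull (L \<inter> sphere c1 r1) \<subseteq> {y. g y \<le> 0}" by (intro hull_minimal conv_le)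
  have "L \<inter> sphere c2 r2 \<subseteq> {y. g y \<ge> 0}"
  proof
    fix y assume y: "y \<in> L \<inter> sphere c2 r2"
    then have "dist y c2 = r2" by (simp add: dist_commute)
    moreover have "r1 \<le> dist c1 y" using e1 y unfolding empty_sphere_def by blast
    then have "r1 \<le> dist y c1" by (simp add: dist_commute)
    then have "r1^2 \<le> (dist y c1)^2" using r1 by (intro power_mono) auto
    ultimately show "y \<in> {y. g y \<ge> 0}" unfolding gid by simp
  qed
  then have P2: "convex hull (L \<inter> sphere c2 r2) \<subseteq> {y. g y \<ge> 0}" by (intro hull_minimal conv_ge)
  define I where "I = interior (convex hull (L \<inter> sphere c1 r1)) \<inter> interior (convex hull (L \<inter> sphere c2 r2))"
  have oI: "open I" unfolding I_def by (intro open_Int open_interior)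
  have y0I: "y0 \<in> I" unfolding I_def using y1 y2 by blast
  obtain e where e: "e > 0" "ball y0 e \<subseteq> I"
    using oI y0I unfolding open_contains_ball by blast
  have g0: "g y = 0" if "y \<in> ball y0 e" for y
  proof -
    have "y \<in> I" using e(2) that by blast
    then have "y \<in> convex hull (L \<inter> sphere c1 r1)" "y \<in> convex hull (L \<inter> sphere c2 r2)"
      unfolding I_def using interior_subset by blast+
    then have "g y \<le> 0" "g y \<ge> 0" using P1 P2 by blast+
    then show ?thesis by simp
  qed
  have "d = 0"
  proof (rule ccontr)
    assume d0: "d \<noteq> 0"
    define y' where "y' = y0 + (e / (2 * norm d)) *\<^sub>R d"
    have "dist y0 y' = e / 2" unfolding y'_def dist_norm using d0 e(1) by simp
    then have "y' \<in> ball y0 e" using e(1) by simp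
    then have "g y' = 0" by (rule g0)
    moreover have "g y0 = 0" using e(1) by (intro g0) simp
    moreover have "g y' = g y0 - (e / norm d) * (d \<bullet> d)" unfolding g_def y'_def
      by (simp add: inner_add_right algebra_simps)
    moreover have "(e / norm d) * (d \<bullet> d) > 0" using d0 e(1) by simp
    ultimately show False by linarith
  qed
  then have c: "c1 = c2" unfolding d_def by simp
  have "g y0 = 0" using e(1) by (intro g0) simp
  then have "r1^2 = r2^2" unfolding g_def k_def using \<open>d = 0\<close> c by simp
  then have "r1 = r2" using r1 r2 by (simp add: power2_eq_iff_nonneg)
  then show ?thesis using c by simp
qed

lemma cross_interior:
  fixes P :: "(real^'n) set"
  assumes "convex P" "z \<in> interior P" "p \<in> P" "(w \<bullet> z) * (w \<bullet> p) < 0"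
  shows "\<exists>x\<in>interior P. w \<bullet> x = 0"
proof -
  have sub: "open_segment z p \<subseteq> interior P"
    using in_interior_closure_convex_segment[OF assms(1,2)] assms(3) closure_subset by blast
  have ne: "w \<bullet> z - w \<bullet> p \<noteq> 0" using assms(4) by (auto simp: mult_less_0_iff)
  define s where "s = (w \<bullet> z) / (w \<bullet> z - w \<bullet> p)"
  have s: "0 < s" "s < 1" unfolding s_def using assms(4)
    by (auto simp: mult_less_0_iff divide_simps)
  define x where "x = (1 - s) *\<^sub>R z + s *\<^sub>R p"
  have "z \<noteq> p" using assms(4) by (auto simp: mult_less_0_iff)
  then have "x \<in> open_segment z p" unfolding x_def in_segment using s by blast
  moreover have "w \<bullet> x = 0"
  proof -
    have "w \<bullet> x = w \<bullet> z - s * (w \<bullet> z - w \<bullet> p)" unfolding x_def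
      by (simp add: inner_add_right algebra_simps)
    also have "s * (w \<bullet> z - w \<bullet> p) = w \<bullet> z" unfolding s_def using ne by simp
    finally show ?thesis by simp
  qed
  ultimately show ?thesis using sub by blast
qed

lemma delaunay_translate:
  fixes L P :: "(real^'n) set"
  assumes L: "is_lattice L" and v: "v \<in> L" and P: "delaunay_polytope L P"
  shows "delaunay_polytope L ((\<lambda>y. - v + y) ` P)"
proof -
  obtain c r where cr: "empty_sphere L c r" "P = convex hull (L \<inter> sphere c r)" "aff_dim P = int CARD('n)"
    using P unfolding delaunay_polytope_def by blast
  have dd: "dist (- v + c) y = dist c (v + y)" for y
    unfolding dist_norm by (simp add: algebra_simps)
  have eq: "L \<inter> sphere (- v + c) r = (\<lambda>y. - v + y) ` (L \<inter> sphere c r)"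
  proof
    show "L \<inter> sphere (- v + c) r \<subseteq> (\<lambda>y. - v + y) ` (L \<inter> sphere c r)"
    proof
      fix y assume y: "y \<in> L \<inter> sphere (- v + c) r"
      have "v + y \<in> L \<inter> sphere c r" using y lat_add[OF L v] dd[of y] by auto
      moreover have "y = - v + (v + y)" by simp
      ultimately show "y \<in> (\<lambda>y. - v + y) ` (L \<inter> sphere c r)" by blast
    qed
    show "(\<lambda>y. - v + y) ` (L \<inter> sphere c r) \<subseteq> L \<inter> sphere (- v + c) r"
    proof
      fix y assume "y \<in> (\<lambda>y. - v + y) ` (L \<inter> sphere c r)"
      then obtain y' where y': "y' \<in> L" "dist c y' = r" "y = - v + y'" by auto
      have "y \<in> L" using y' lat_add[OF L lat_neg[OF L v]] by simp
      moreover have "dist (- v + c) y = r" using y' dd[of y] by simp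
      ultimately show "y \<in> L \<inter> sphere (- v + c) r" by simp
    qed
  qed
  have "empty_sphere L (- v + c) r" unfolding empty_sphere_def
  proof
    fix y assume "y \<in> L"
    then have "v + y \<in> L" using lat_add[OF L v] by simp
    then show "r \<le> dist (- v + c) y" using cr(1) dd[of y] unfolding empty_sphere_def by simp
  qed
  moreover have "(\<lambda>y. - v + y) ` P = convex hull (L \<inter> sphere (- v + c) r)"
    unfolding eq cr(2) by (rule convex_hull_translation[symmetric])
  moreover have "aff_dim ((\<lambda>y. - v + y) ` P) = int CARD('n)"
    using aff_dim_translation_eq[of "- v" P] cr(3) by simp
  ultimately show ?thesis unfolding delaunay_polytope_def by metis
qed


lemma no_cross:
  fixes L H P :: "(real^'n) set"
  assumes L: "is_lattice L" and lam: "lamina L H" and Hw: "H = {x. w \<bullet> x = 0}" and w0: "w \<noteq> 0"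
    and P: "delaunay_polytope L P" and pq: "p \<in> P" "q \<in> P" "w \<bullet> p < 0" "0 < w \<bullet> q"
  shows False
proof -
  obtain c r where cr: "empty_sphere L c r" "P = convex hull (L \<inter> sphere c r)"
      "aff_dim P = int CARD('n)" "convex P" "interior P \<noteq> {}"
    using delaunay_basic[OF P] by blast
  obtain z where z: "z \<in> interior P" using cr(5) by blast
  obtain x where x: "x \<in> interior P" "w \<bullet> x = 0"
  proof (cases "w \<bullet> z = 0")
    case True then show thesis using that z by blast
  next
    case False
    show thesis
    proof (cases "w \<bullet> z > 0")
      case True
      then have "(w \<bullet> z) * (w \<bullet> p) < 0" using pq by (simp add: mult_pos_neg)
      then show thesis using cross_interior[OF cr(4) z pq(1)] that by blast
    next
      case False
      then have "(w \<bullet> z) * (w \<bullet> q) < 0" using pq \<open>w \<bullet> z \<noteq> 0\<close> by (simp add: mult_neg_pos)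
      then show thesis using cross_interior[OF cr(4) z pq(2)] that by blast
    qed
  qed
  have xH: "x \<in> H" using x Hw by simp
  have lh: "lattice_hyperplane L H" using lam unfolding lamina_def by blast
  obtain R where cov: "\<forall>y\<in>H. \<exists>z\<in>L \<inter> H. dist y z \<le> R" using lat_cover[OF L lh] by blast
  have fin: "finite ((L \<inter> H) \<inter> S)" if "bounded S" for S
  proof -
    have "(L \<inter> H) \<inter> S \<subseteq> L \<inter> S" by blast
    then show ?thesis using lat_finite[OF L that] by (rule finite_subset)
  qed
  obtain a \<beta> where ab: "a \<in> H" "\<forall>y\<in>L \<inter> H. 0 \<le> pw a \<beta> y"
      "x \<in> convex hull {y\<in>L \<inter> H. pw a \<beta> y = 0}"
      "aff_dim {y\<in>L \<inter> H. pw a \<beta> y = 0} = int CARD('n) - 1"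
    using cell_full[OF fin cov _ Hw w0 xH] by blast
  define C where "C = {y\<in>L \<inter> H. pw a \<beta> y = 0}"
  have "C \<noteq> {}"
  proof
    assume "C = {}" then have "aff_dim C = -1" by simp
    then show False using ab(4) unfolding C_def by simp
  qed
  then obtain y1 where y1: "y1 \<in> C" by blast
  have "(dist a y1)^2 = \<beta> + a \<bullet> a" using y1 unfolding C_def pw_dist by auto
  then have Xnn: "\<beta> + a \<bullet> a \<ge> 0" by (metis zero_le_power2)
  define \<rho> where "\<rho> = sqrt (\<beta> + a \<bullet> a)"
  have \<rho>nn: "\<rho> \<ge> 0" unfolding \<rho>_def using Xnn by simp
  have sq: "\<rho>^2 = \<beta> + a \<bullet> a" unfolding \<rho>_def using Xnn by simp
  have sph: "(L \<inter> H) \<inter> sphere a \<rho> = C"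
  proof -
    have iff: "y \<in> sphere a \<rho> \<longleftrightarrow> pw a \<beta> y = 0" for y
    proof -
      have "dist a y = \<rho> \<longleftrightarrow> (dist a y)^2 = \<rho>^2"
        using \<rho>nn by (simp add: power2_eq_iff_nonneg)
      also have "\<dots> \<longleftrightarrow> pw a \<beta> y = 0" unfolding pw_dist sq by simp
      finally show ?thesis by simp
    qed
    show ?thesis unfolding C_def using iff by blast
  qed
  have emp: "empty_sphere (L \<inter> H) a \<rho>" unfolding empty_sphere_def
  proof
    fix v assume "v \<in> L \<inter> H"
    then have "0 \<le> pw a \<beta> v" using ab(2) by blast
    then have "\<rho>^2 \<le> (dist a v)^2" unfolding pw_dist sq by simp
    then show "\<rho> \<le> dist a v" using \<rho>nn by (simp add: power2_le_iff_abs_le)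
  qed
  define Q where "Q = convex hull C"
  have adQ: "aff_dim Q = int CARD('n) - 1" unfolding Q_def C_def aff_dim_convex_hull by (rule ab(4))
  have QQ: "Q = convex hull ((L \<inter> H) \<inter> sphere a \<rho>)" unfolding Q_def sph ..
  have "delaunay_polytope_in L H Q" unfolding delaunay_polytope_in_def
    using ab(1) emp QQ adQ by blast
  then obtain P' where P': "delaunay_polytope L P'" "Q facet_of P'"
    using lam unfolding lamina_def by blast
  obtain c' r' where cr': "empty_sphere L c' r'" "P' = convex hull (L \<inter> sphere c' r')"
      "aff_dim P' = int CARD('n)" "convex P'" "interior P' \<noteq> {}"
    using delaunay_basic[OF P'(1)] by blast
  have xQ: "x \<in> Q" using ab(3) unfolding Q_def C_def by simp
  have QP': "Q \<subseteq> P'" using P'(2) unfolding facet_of_def using face_of_imp_subset by blast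
  have "x \<in> closure (interior P')"
    using convex_closure_interior[OF cr'(4,5)] xQ QP' closure_subset by blast
  moreover obtain e where e: "e > 0" "ball x e \<subseteq> interior P"
    using x(1) open_interior[of P] unfolding open_contains_ball by blast
  ultimately obtain y2 where y2: "y2 \<in> interior P'" "dist y2 x < e"
    using closure_approachable[of x "interior P'"] by blast
  have "y2 \<in> ball x e" using y2(2) by (simp add: dist_commute)
  then have "y2 \<in> interior P" using e(2) by blast
  then have PP': "P = P'" unfolding cr(2) cr'(2)
    by (intro delaunay_unique[OF cr(1) cr'(1)]) (use y2(1) cr(2) cr'(2) in simp_all)
  have "Q face_of P" using P'(2) PP' unfolding facet_of_def by blast
  moreover have "Q \<noteq> P"
  proof
    assume "Q = P"
    then have "aff_dim Q = aff_dim P'" using PP' by simp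
    then show False using P'(2) cr'(3) unfolding facet_of_def by simp
  qed
  ultimately have "Q \<inter> interior P = {}" by (rule face_of_disjoint_interior)
  then show False using xQ x(1) by blast
qed


lemma transl_eq:
  fixes H :: "(real^'n) set"
  assumes "H = {x. w \<bullet> x = 0}"
  shows "(\<lambda>x. x + v) ` H = {y. w \<bullet> y = w \<bullet> v}"
proof
  show "(\<lambda>x. x + v) ` H \<subseteq> {y. w \<bullet> y = w \<bullet> v}" using assms by (auto simp: inner_add_right)
  show "{y. w \<bullet> y = w \<bullet> v} \<subseteq> (\<lambda>x. x + v) ` H"
  proof
    fix y assume "y \<in> {y. w \<bullet> y = w \<bullet> v}"
    then have "y - v \<in> H" using assms by (simp add: inner_diff_right)
    moreover have "y = (y - v) + v" by simp
    ultimately show "y \<in> (\<lambda>x. x + v) ` H" by blast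
  qed
qed

theorem mainTheorem2:
  fixes L H :: "(real^'n) set"
  assumes "is_lattice L"
    and "lamina L H"
    and "delaunay_polytope L P"
  shows "\<exists>A B. neighboring L H A B \<and> P \<subseteq> convex hull (A \<union> B) \<and>
           {v. v extreme_point_of P} \<subseteq> A \<union> B"
proof -
  note L = assms(1) and lam = assms(2) and DP = assms(3)
  have lh: "lattice_hyperplane L H" using lam unfolding lamina_def by blast
  obtain w where w0: "w \<noteq> 0" and Hw: "H = {x. w \<bullet> x = 0}"
    using hyperplane_normal[of H] lh unfolding lattice_hyperplane_def by blast
  obtain c r where cr: "empty_sphere L c r" "P = convex hull (L \<inter> sphere c r)" "aff_dim P = int CARD('n)"
    using DP unfolding delaunay_polytope_def by blast
  define V where "V = L \<inter> sphere c r"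
  have PV: "P = convex hull V" using cr(2) unfolding V_def .
  have fV: "finite V" unfolding V_def using lat_finite[OF L bounded_sphere] .
  have Vne: "V \<noteq> {}"
  proof
    assume "V = {}" then have "aff_dim P = -1" using PV by simp
    then show False using cr(3) by simp
  qed
  define m where "m = Min ((\<lambda>y. w \<bullet> y) ` V)"
  define M where "M = Max ((\<lambda>y. w \<bullet> y) ` V)"
  have "m \<in> (\<lambda>y. w \<bullet> y) ` V" unfolding m_def using fV Vne by (intro Min_in) auto
  then obtain pm where pm: "pm \<in> V" "w \<bullet> pm = m" by auto
  have "M \<in> (\<lambda>y. w \<bullet> y) ` V" unfolding M_def using fV Vne by (intro Max_in) auto
  then obtain pM where pM: "pM \<in> V" "w \<bullet> pM = M" by auto
  have bnd: "m \<le> w \<bullet> y \<and> w \<bullet> y \<le> M" if "y \<in> V" for y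
    unfolding m_def M_def using fV that by (auto intro: Min_le Max_ge)
  have VL: "V \<subseteq> L" unfolding V_def by blast
  have claim: "\<not> (m < w \<bullet> v \<and> w \<bullet> v < M)" if v: "v \<in> L" for v
  proof
    assume mv: "m < w \<bullet> v \<and> w \<bullet> v < M"
    have DP1: "delaunay_polytope L ((\<lambda>y. - v + y) ` P)" by (rule delaunay_translate[OF L v DP])
    have "- v + pm \<in> (\<lambda>y. - v + y) ` P" using pm(1) PV by (auto intro: hull_inc)
    moreover have "- v + pM \<in> (\<lambda>y. - v + y) ` P" using pM(1) PV by (auto intro: hull_inc)
    moreover have "w \<bullet> (- v + pm) < 0" using pm(2) mv by (simp add: inner_add_right inner_diff_right)
    moreover have "0 < w \<bullet> (- v + pM)" using pM(2) mv by (simp add: inner_add_right inner_diff_right)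
    ultimately show False using no_cross[OF L lam Hw w0 DP1] by blast
  qed
  have mM: "m < M"
  proof (rule ccontr)
    assume "\<not> m < M"
    then have "V \<subseteq> {y. w \<bullet> y = m}" using bnd by force
    then have "P \<subseteq> {y. w \<bullet> y = m}" unfolding PV by (intro hull_minimal) (auto simp: convex_hyperplane)
    then have "aff_dim P \<le> aff_dim {y. w \<bullet> y = m}" by (rule aff_dim_subset)
    also have "\<dots> = int CARD('n) - 1" using w0 by simp
    finally show False using cr(3) by simp
  qed
  define A where "A = (\<lambda>x. x + pm) ` H"
  define B where "B = (\<lambda>x. x + pM) ` H"
  have A: "A = {y. w \<bullet> y = m}" unfolding A_def transl_eq[OF Hw] pm(2) ..
  have B: "B = {y. w \<bullet> y = M}" unfolding B_def transl_eq[OF Hw] pM(2) ..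
  have AT: "A \<in> translates L H" unfolding A_def translates_def using pm(1) VL by blast
  have BT: "B \<in> translates L H" unfolding B_def translates_def using pM(1) VL by blast
  have AB: "A \<noteq> B" using A B mM pm(2) by auto
  have slab: "convex hull (A \<union> B) \<subseteq> {y. m \<le> w \<bullet> y \<and> w \<bullet> y \<le> M}"
  proof (rule hull_minimal)
    show "A \<union> B \<subseteq> {y. m \<le> w \<bullet> y \<and> w \<bullet> y \<le> M}" using A B mM by auto
    have "{y. m \<le> w \<bullet> y \<and> w \<bullet> y \<le> M} = {y. m \<le> w \<bullet> y} \<inter> {y. w \<bullet> y \<le> M}" by auto
    then show "convex {y. m \<le> w \<bullet> y \<and> w \<bullet> y \<le> M}"
      by (metis convex_Int convex_halfspace_ge convex_halfspace_le)
  qed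
  have nb: "neighboring L H A B" unfolding neighboring_def
  proof (intro conjI AT BT AB notI)
    assume "\<exists>C\<in>translates L H. C \<noteq> A \<and> C \<noteq> B \<and> C \<subseteq> convex hull (A \<union> B)"
    then obtain C v where C: "C = (\<lambda>x. x + v) ` H" "v \<in> L" "C \<noteq> A" "C \<noteq> B" "C \<subseteq> convex hull (A \<union> B)"
      unfolding translates_def by blast
    have "v \<in> C" unfolding C(1) using Hw by force
    then have "m \<le> w \<bullet> v \<and> w \<bullet> v \<le> M" using C(5) slab by blast
    then have "w \<bullet> v = m \<or> w \<bullet> v = M" using claim[OF C(2)] by linarith
    moreover have "C = {y. w \<bullet> y = w \<bullet> v}" unfolding C(1) transl_eq[OF Hw] ..
    ultimately show False using A B C(3,4) by auto
  qed
  have VAB: "V \<subseteq> A \<union> B"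
  proof
    fix y assume y: "y \<in> V"
    then have "w \<bullet> y = m \<or> w \<bullet> y = M" using bnd[OF y] claim[of y] VL by force
    then show "y \<in> A \<union> B" using A B by auto
  qed
  have "P \<subseteq> convex hull (A \<union> B)" unfolding PV by (rule hull_mono[OF VAB])
  moreover have "{v. v extreme_point_of P} \<subseteq> A \<union> B"
    using VAB extreme_point_of_convex_hull unfolding PV by blast
  ultimately show ?thesis using nb by blast
qed

end
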